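(* Let $\lambda>0$. Consider $\mathcal{UNB}(r,p)$ distributions with $r\to\infty$ and $p=p(r)\in(0,1)$ such that $P:=q/p\to0$ and $rP\to\lambda$, where $q=1-p$. Then for each fixed $x\in\{0,1,2,\dots\}$ the $\mathcal{UNB}(r,p)$ probability of $x$ converges to $$\frac{\lambda^{x}e^{-\lambda}}{(x+1)!}\,{}_1F_1(1;x+2;\lambda),$$ which is the probability mass function of the uniform-Poisson distribution $\mathcal{UP}(\lambda)$.
   Context: $\mathcal{UNB}(r,p)$ ($r>0$, $0<p<1$) is the law of $X$ where $N$ is negative binomial with $P(N=n)=\binom{r+n-1}{n}p^rq^n$, $n\ge0$, and $X\mid N=n$ is uniform on $\{0,1,\dots,n\}$; its pmf is $\frac{q^xp^r}{1+x}\binom{r+x-1}{x}{}_2F_1(1,r+x;2+x;q)$, with $\binom{r+x-1}{x}=\frac{\Gamma(r+x)}{x!\Gamma(r)}$ and ${}_2F_1(a,b;c;z)=\sum_{n\ge0}\frac{(a)_n(b)_n}{(c)_n}\frac{z^n}{n!}$. The confluent hypergeometric function is ${}_1F_1(a;c;z)=\sum_{n\ge0}\frac{(a)_n}{(c)_n}\frac{z^n}{n!}$; here $(s)_n=s(s+1)\cdots(s+n-1)$, $(s)_0=1$. The uniform-Poisson law $\mathcal{UP}(\lambda)$ is that of $X$ where $N\sim$ Poisson$(\lambda)$ and $X\mid N=n$ is uniform on $\{0,\dots,n\}$. *)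

theory Defs
  imports "HOL-Analysis.Analysis"
begin

text \<open>Negative binomial pmf: P(N=n) = binom(r+n-1,n) p^r q^n with
  binom(r+n-1,n) = Gamma(r+n)/(n! Gamma(r)).\<close>
definition negbin_pmf :: "real \<Rightarrow> real \<Rightarrow> nat \<Rightarrow> real" where
  "negbin_pmf r p n = Gamma (r + real n) / (fact n * Gamma r) * p powr r * (1 - p) ^ n"

text \<open>UNB(r,p): X | N=n uniform on {0..n}, so P(X=x) = sum over n >= x of P(N=n)/(n+1).\<close>
definition unb_pmf :: "real \<Rightarrow> real \<Rightarrow> nat \<Rightarrow> real" where
  "unb_pmf r p x = (\<Sum>n. if x \<le> n then negbin_pmf r p n / real (n + 1) else 0)"

definition poisson_pmf_real :: "real \<Rightarrow> nat \<Rightarrow> real" where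
  "poisson_pmf_real l n = exp (- l) * l ^ n / fact n"

text \<open>UP(lambda): X | N=n uniform on {0..n}, N ~ Poisson(lambda).\<close>
definition up_pmf :: "real \<Rightarrow> nat \<Rightarrow> real" where
  "up_pmf l x = (\<Sum>n. if x \<le> n then poisson_pmf_real l n / real (n + 1) else 0)"

definition hyp1F1 :: "real \<Rightarrow> real \<Rightarrow> real \<Rightarrow> real" where
  "hyp1F1 a c z = (\<Sum>n. pochhammer a n / pochhammer c n * z ^ n / fact n)"

end

theory Submission
  imports Defs
begin

lemma scheffe_weighted:
  fixes a :: "'b \<Rightarrow> nat \<Rightarrow> real" and F :: "'b filter"
  assumes apos: "eventually (\<lambda>r. \<forall>n. a r n \<ge> 0) F"
    and asum: "eventually (\<lambda>r. a r sums 1) F"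
    and bsum: "b sums 1"
    and bnn: "\<And>n. b n \<ge> 0"
    and lim: "\<And>n. ((\<lambda>r. a r n) \<longlongrightarrow> b n) F"
    and c: "\<And>n. 0 \<le> c n \<and> c n \<le> 1"
  shows "((\<lambda>r. \<Sum>n. c n * a r n) \<longlongrightarrow> (\<Sum>n. c n * b n)) F"
proof (rule tendstoI)
  fix e :: real assume e: "e > 0"
  define \<epsilon> where "\<epsilon> = e / 5"
  have ep: "\<epsilon> > 0" using e by (simp add: \<epsilon>_def)
  have "(\<lambda>M. \<Sum>n<M. b n) \<longlonglongrightarrow> 1" using bsum by (simp add: sums_def)
  then obtain M where M: "dist (\<Sum>n<M. b n) 1 < \<epsilon>"
    using ep by (meson LIMSEQ_iff_nz dist_real_def order.refl)  
  have bs: "summable b" using bsum by (simp add: sums_summable)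
  have cbs: "summable (\<lambda>n. c n * b n)"
    by (rule summable_comparison_test[OF _ bs]) (use c bnn in \<open>auto intro!: mult_le_one[of _ "b _", simplified] simp: mult_left_le_one_le\<close>)
  have btail: "(\<Sum>n. c (n+M) * b (n+M)) \<le> (\<Sum>n. b (n+M))"
    apply (rule suminf_le)
    using c bnn summable_iff_shift[of "\<lambda>n. c n * b n" M] summable_iff_shift[of b M] cbs bs by (auto simp: mult_left_le_one_le)
  have btail0: "(\<Sum>n. c (n+M) * b (n+M)) \<ge> 0"
    by (rule suminf_nonneg) (use c bnn summable_iff_shift[of "\<lambda>n. c n * b n" M] cbs in \<open>auto\<close>)
  have bsplit: "(\<Sum>n. b (n+M)) = 1 - (\<Sum>n<M. b n)"
    using suminf_split_initial_segment[OF bs, of M] bsum sums_unique by fastforce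
  have cbsplit: "(\<Sum>n. c n * b n) = (\<Sum>n. c (n+M) * b (n+M)) + (\<Sum>n<M. c n * b n)"
    using suminf_split_initial_segment[OF cbs, of M] by simp
  have l1: "((\<lambda>r. \<Sum>n<M. a r n) \<longlongrightarrow> (\<Sum>n<M. b n)) F"
    by (intro tendsto_sum lim)
  have l2: "((\<lambda>r. \<Sum>n<M. c n * a r n) \<longlongrightarrow> (\<Sum>n<M. c n * b n)) F"
    by (intro tendsto_sum tendsto_mult tendsto_const lim)
  have ev1: "eventually (\<lambda>r. dist (\<Sum>n<M. a r n) (\<Sum>n<M. b n) < \<epsilon>) F"
    using tendstoD[OF l1 ep] .
  have ev2: "eventually (\<lambda>r. dist (\<Sum>n<M. c n * a r n) (\<Sum>n<M. c n * b n) < \<epsilon>) F"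
    using tendstoD[OF l2 ep] .
  show "eventually (\<lambda>r. dist (\<Sum>n. c n * a r n) (\<Sum>n. c n * b n) < e) F"
    using ev1 ev2 apos asum
  proof eventually_elim
    case (elim r)
    have as: "summable (a r)" using elim(4) by (simp add: sums_summable)
    have cas: "summable (\<lambda>n. c n * a r n)"
      by (rule summable_comparison_test[OF _ as]) (use c elim(3) in \<open>auto simp: mult_left_le_one_le\<close>)
    have atail: "(\<Sum>n. c (n+M) * a r (n+M)) \<le> (\<Sum>n. a r (n+M))"
      apply (rule suminf_le)
      using c elim(3) summable_iff_shift[of "\<lambda>n. c n * a r n" M] summable_iff_shift[of "a r" M] cas as by (auto simp: mult_left_le_one_le)
    have atail0: "(\<Sum>n. c (n+M) * a r (n+M)) \<ge> 0"
      by (rule suminf_nonneg) (use c elim(3) summable_iff_shift[of "\<lambda>n. c n * a r n" M] cas in \<open>auto\<close>)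
    have asplit: "(\<Sum>n. a r (n+M)) = 1 - (\<Sum>n<M. a r n)"
      using suminf_split_initial_segment[OF as, of M] elim(4) sums_unique by fastforce
    have casplit: "(\<Sum>n. c n * a r n) = (\<Sum>n. c (n+M) * a r (n+M)) + (\<Sum>n<M. c n * a r n)"
      using suminf_split_initial_segment[OF cas, of M] by simp
    show ?case
      using elim(1,2) M atail atail0 asplit casplit btail btail0 bsplit cbsplit ep
      unfolding \<epsilon>_def dist_real_def by (simp add: abs_if split: if_splits) linarith?
  qed
qed


lemma negbin_alt:
  assumes "r > 0"
  shows "negbin_pmf r p n = pochhammer r n * (1 - p) ^ n / fact n * p powr r"
proof -
  have "r \<notin> \<int>\<^sub>\<le>\<^sub>0" using assms by (auto elim!: nonpos_Ints_cases)
  then have "pochhammer r n = Gamma (r + real n) / Gamma r" by (simp add: pochhammer_Gamma)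
  then show ?thesis unfolding negbin_pmf_def by (simp add: field_simps)
qed

lemma negbin_sums:
  assumes "r > 0" "0 < p" "p < 1"
  shows "negbin_pmf r p sums 1"
proof -
  have "(\<lambda>n. ((-r) gchoose n) * (-(1-p))^n) sums (1 + (-(1-p))) powr (-r)"
    by (rule gen_binomial_real) (use assms in auto)
  moreover have "((-r) gchoose n) * (-(1-p))^n = pochhammer r n * (1 - p) ^ n / fact n" for n
    by (simp add: gbinomial_pochhammer power_mult_distrib[symmetric])
  ultimately have "(\<lambda>n. pochhammer r n * (1 - p) ^ n / fact n) sums p powr (-r)" by simp
  from sums_mult2[OF this, of "p powr r"]
  have "(\<lambda>n. pochhammer r n * (1 - p) ^ n / fact n * p powr r) sums (p powr (-r) * p powr r)" .
  moreover have "p powr (-r) * p powr r = 1" using assms by (simp add: powr_add[symmetric])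
  ultimately have "(\<lambda>n. pochhammer r n * (1 - p) ^ n / fact n * p powr r) sums 1" by simp
  moreover have "negbin_pmf r p = (\<lambda>n. pochhammer r n * (1 - p) ^ n / fact n * p powr r)"
    using negbin_alt[OF assms(1)] by auto
  ultimately show ?thesis by (simp only:)
qed

lemma negbin_nonneg:
  assumes "r > 0" "0 < p" "p < 1"
  shows "negbin_pmf r p n \<ge> 0"
  using assms by (simp add: negbin_alt pochhammer_pos less_imp_le)

lemma poisson_sums: "poisson_pmf_real l sums 1"
proof -
  have "(\<lambda>n. exp (-l) * (l^n /\<^sub>R fact n)) sums (exp (-l) * exp l)"
    by (rule sums_mult[OF exp_converges])
  then show ?thesis unfolding poisson_pmf_real_def by (simp add: exp_minus field_simps)
qed


lemma negbin_lim:
  assumes p01: "\<forall>r>0. 0 < p r \<and> p r < 1"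
    and P0: "((\<lambda>r. (1 - p r) / p r) \<longlongrightarrow> 0) at_top"
    and rP: "((\<lambda>r. r * ((1 - p r) / p r)) \<longlongrightarrow> l) at_top"
  shows "((\<lambda>r. negbin_pmf r (p r) n) \<longlongrightarrow> poisson_pmf_real l n) at_top"
proof -
  have ev: "eventually (\<lambda>r::real. r > 0) at_top" by (rule eventually_gt_at_top)
  have pf: "eventually (\<lambda>r. 1 / (1 + (1 - p r) / p r) = p r) at_top"
    using ev by eventually_elim (use p01 in \<open>auto simp: field_simps\<close>)
  have "((\<lambda>r. 1 / (1 + (1 - p r) / p r)) \<longlongrightarrow> 1 / (1 + 0)) at_top"
    by (intro tendsto_intros P0) simp
  then have plim: "(p \<longlongrightarrow> 1) at_top" using tendsto_cong[OF pf] by simp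
  have rqf: "eventually (\<lambda>r. r * ((1 - p r) / p r) * p r = r * (1 - p r)) at_top"
    using ev by eventually_elim (use p01 in \<open>auto simp: field_simps\<close>)
  have "((\<lambda>r. r * ((1 - p r) / p r) * p r) \<longlongrightarrow> l * 1) at_top"
    by (intro tendsto_intros rP plim)
  then have rq: "((\<lambda>r. r * (1 - p r)) \<longlongrightarrow> l) at_top" using tendsto_cong[OF rqf] by simp
  have q0: "((\<lambda>r. 1 - p r) \<longlongrightarrow> 0) at_top"
    using tendsto_diff[OF tendsto_const[of 1] plim] by simp
  have fac: "((\<lambda>r. (r + real i) * (1 - p r)) \<longlongrightarrow> l) at_top" for i
  proof -
    have "((\<lambda>r. r * (1 - p r) + real i * (1 - p r)) \<longlongrightarrow> l + real i * 0) at_top"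
      by (intro tendsto_intros rq q0)
    then show ?thesis by (simp add: algebra_simps)
  qed
  have prodlim: "((\<lambda>r. \<Prod>i<n. (r + real i) * (1 - p r)) \<longlongrightarrow> (\<Prod>i<n. l)) at_top"
    by (intro tendsto_prod fac)
  have prodeq: "(\<Prod>i<n. (r + real i) * (1 - p r)) = pochhammer r n * (1 - p r) ^ n" for r
    by (simp add: pochhammer_prod prod.distrib atLeast0LessThan)
  have lo: "eventually (\<lambda>r. - (r * ((1 - p r) / p r)) \<le> r * ln (p r)) at_top"
    using ev
  proof eventually_elim
    case (elim r)
    have pr: "0 < p r" "p r < 1" using p01 elim by auto
    have "ln (1 / p r) \<le> 1 / p r - 1" using pr by (intro ln_le_minus_one) simp
    then have "- ln (p r) \<le> (1 - p r) / p r" using pr by (simp add: ln_div field_simps)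
    then have "r * (- ln (p r)) \<le> r * ((1 - p r) / p r)"
      using elim by (intro mult_left_mono) auto
    then show ?case by simp
  qed
  have hi: "eventually (\<lambda>r. r * ln (p r) \<le> - (r * (1 - p r))) at_top"
    using ev
  proof eventually_elim
    case (elim r)
    have pr: "0 < p r" "p r < 1" using p01 elim by auto
    have "ln (p r) \<le> p r - 1" using pr by (intro ln_le_minus_one) simp
    then have "r * ln (p r) \<le> r * (p r - 1)"
      using elim by (intro mult_left_mono) auto
    then show ?case by (simp add: algebra_simps)
  qed
  have lnlim: "((\<lambda>r. r * ln (p r)) \<longlongrightarrow> - l) at_top"
    by (rule tendsto_sandwich[OF lo hi tendsto_minus[OF rP] tendsto_minus[OF rq]])
  have pwf: "eventually (\<lambda>r. exp (r * ln (p r)) = p r powr r) at_top"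
    using ev
  proof eventually_elim
    case (elim r)
    then have "p r \<noteq> 0" using p01 by auto
    then show ?case by (simp add: powr_def)
  qed
  have pwlim: "((\<lambda>r. p r powr r) \<longlongrightarrow> exp (- l)) at_top"
    using tendsto_cong[OF pwf] tendsto_exp[OF lnlim] by simp
  have "((\<lambda>r. (\<Prod>i<n. (r + real i) * (1 - p r)) / fact n * p r powr r) \<longlongrightarrow> (\<Prod>i<n. l) / fact n * exp (- l)) at_top"
    by (intro tendsto_intros prodlim pwlim) simp
  moreover have "eventually (\<lambda>r. (\<Prod>i<n. (r + real i) * (1 - p r)) / fact n * p r powr r = negbin_pmf r (p r) n) at_top"
    using ev by eventually_elim (simp add: negbin_alt prodeq)
  moreover have "(\<Prod>i<n. l) / fact n * exp (- l) = poisson_pmf_real l n"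
    by (simp add: poisson_pmf_real_def)
  ultimately show ?thesis by (simp add: tendsto_cong)
qed


lemma up_identity:
  assumes "l > 0"
  shows "l ^ x * exp (- l) / fact (x + 1) * hyp1F1 1 (real x + 2) l = up_pmf l x"
proof -
  define C where "C = l ^ x * exp (- l) / fact (x + 1)"
  have C0: "C \<noteq> 0" using assms by (simp add: C_def)
  define f where "f n = (if x \<le> n then poisson_pmf_real l n / real (n + 1) else 0)" for n
  have pnn: "poisson_pmf_real l n \<ge> 0" for n using assms by (simp add: poisson_pmf_real_def)
  have fb: "norm (f n) \<le> poisson_pmf_real l n" for n
  proof -
    have "poisson_pmf_real l n / real (n+1) \<le> poisson_pmf_real l n / 1"
      by (rule divide_left_mono) (use pnn in auto)
    then show ?thesis using pnn[of n] by (auto simp: f_def)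
  qed
  have fs: "summable f"
    by (rule summable_comparison_test[OF _ sums_summable[OF poisson_sums]]) (use fb in auto)
  have "f sums up_pmf l x" using fs unfolding up_pmf_def f_def[abs_def] by (simp add: summable_sums)
  then have s1: "(\<lambda>k. f (k + x)) sums up_pmf l x"
    by (subst sums_zero_iff_shift) (auto simp: f_def)
  have ph: "pochhammer (real x + 2) k * fact (x+1) = (fact (x+1+k) :: real)" for k
    by (induction k) (simp_all add: pochhammer_Suc algebra_simps)
  have eq: "f (k + x) = C * (pochhammer 1 k / pochhammer (real x + 2) k * l ^ k / fact k)" for k
  proof -
    have fne: "(fact (x+1) :: real) \<noteq> 0" "(fact k :: real) \<noteq> 0" "(fact (x+1+k) :: real) \<noteq> 0" by simp_all
    have p2: "pochhammer (real x + 2) k = fact (x+1+k) / fact (x+1)"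
      by (rule eq_divide_imp[OF _ ph[of k]]) (simp del: fact_Suc)
    have t: "pochhammer 1 k / pochhammer (real x + 2) k * l ^ k / fact k = fact (x+1) * l ^ k / fact (x+1+k)"
      unfolding p2 pochhammer_fact[symmetric] using fne by (simp del: fact_Suc add: field_simps)
    have ff: "(fact (x+1+k) :: real) = real (k + x + 1) * fact (k + x)"
      by (simp add: algebra_simps)
    have "f (k + x) = exp (- l) * l ^ (k + x) / (real (k + x + 1) * fact (k + x))"
      by (simp add: f_def poisson_pmf_real_def del: of_nat_Suc of_nat_add)
    also have "\<dots> = C * (fact (x+1) * l ^ k / fact (x+1+k))"
      unfolding ff[symmetric] C_def using fne by (simp del: fact_Suc add: power_add field_simps)
    finally show ?thesis unfolding t .
  qed
  from s1 have "(\<lambda>k. C * (pochhammer 1 k / pochhammer (real x + 2) k * l ^ k / fact k)) sums up_pmf l x"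
    by (simp only: eq)
  from sums_mult[OF this, of "1 / C"] C0
  have "(\<lambda>k. pochhammer 1 k / pochhammer (real x + 2) k * l ^ k / fact k) sums (up_pmf l x / C)"
    by simp
  then have "hyp1F1 1 (real x + 2) l = up_pmf l x / C"
    unfolding hyp1F1_def by (rule sums_unique[symmetric])
  then have "C * hyp1F1 1 (real x + 2) l = up_pmf l x" using C0 by simp
  then show ?thesis by (simp only: C_def)
qed

theorem mainTheorem7:
  fixes l :: real and p :: "real \<Rightarrow> real" and x :: nat
  assumes "l > 0"
    and "\<forall>r>0. 0 < p r \<and> p r < 1"
    and "((\<lambda>r. (1 - p r) / p r) \<longlongrightarrow> 0) at_top"
    and "((\<lambda>r. r * ((1 - p r) / p r)) \<longlongrightarrow> l) at_top"
  shows "((\<lambda>r. unb_pmf r (p r) x) \<longlongrightarrow>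
            l ^ x * exp (- l) / fact (x + 1) * hyp1F1 1 (real x + 2) l) at_top
         \<and> l ^ x * exp (- l) / fact (x + 1) * hyp1F1 1 (real x + 2) l = up_pmf l x"
proof
  have id: "l ^ x * exp (- l) / fact (x + 1) * hyp1F1 1 (real x + 2) l = up_pmf l x"
    by (rule up_identity[OF assms(1)])
  then show "l ^ x * exp (- l) / fact (x + 1) * hyp1F1 1 (real x + 2) l = up_pmf l x" .
  define c where "c n = (if x \<le> n then 1 / real (n + 1) else 0)" for n
  have ceq: "(if x \<le> n then v / real (n + 1) else 0) = c n * v" for n v
    by (simp add: c_def)
  have ev: "eventually (\<lambda>r::real. r > 0) at_top" by (rule eventually_gt_at_top)
  have "((\<lambda>r. \<Sum>n. c n * negbin_pmf r (p r) n) \<longlongrightarrow> (\<Sum>n. c n * poisson_pmf_real l n)) at_top"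
  proof (rule scheffe_weighted)
    show "eventually (\<lambda>r. \<forall>n. negbin_pmf r (p r) n \<ge> 0) at_top"
      using ev by eventually_elim (use assms(2) negbin_nonneg in auto)
    show "eventually (\<lambda>r. negbin_pmf r (p r) sums 1) at_top"
      using ev by eventually_elim (use assms(2) negbin_sums in auto)
    show "poisson_pmf_real l sums 1" by (rule poisson_sums)
    show "poisson_pmf_real l n \<ge> 0" for n using assms(1) by (simp add: poisson_pmf_real_def)
    show "((\<lambda>r. negbin_pmf r (p r) n) \<longlongrightarrow> poisson_pmf_real l n) at_top" for n
      by (rule negbin_lim[OF assms(2-4)])
    show "0 \<le> c n \<and> c n \<le> 1" for n by (simp add: c_def)
  qed
  then show "((\<lambda>r. unb_pmf r (p r) x) \<longlongrightarrow>
            l ^ x * exp (- l) / fact (x + 1) * hyp1F1 1 (real x + 2) l) at_top"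
    unfolding id unb_pmf_def up_pmf_def ceq .
qed

end
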